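(* Let $q=2^m$, let $k\in\mathbb{F}_q$ with $Tr(k)=1$, let $i\in\mathbb{F}_{q^2}\setminus\mathbb{F}_q$ with $i^2=i+k$, and let $\alpha=A+iB$, $\beta=C+iD$ with $A,B,C,D\in\mathbb{F}_q$ and $\alpha\beta\neq 0$. Then the following are equivalent: (i) $A=\frac{BC+BD+B}{D}$ with $D\neq 0$, $BD(B+D)\neq 0$, $kD^2+C^2+CD+1=0$, and $Tr\left(1+\frac{D}{B^2}\right)=0$; (ii) $\beta=\alpha^{q-1}\in\mathbb{F}_{q^2}\setminus\mathbb{F}_q$, $Tr\left(1+\frac{1}{\alpha^{q+1}}\right)=0$, and $\alpha+\alpha^q\neq\beta+\beta^q$.
   Context: $Tr:\mathbb{F}_q\to\mathbb{F}_2$ is the absolute trace $Tr(z)=z+z^2+\cdots+z^{2^{m-1}}$. *)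

theory Defs
  imports Main
begin

text \<open>The ambient field is a finite field of order q^2 = 2^(2m);
  F_q is its unique subfield of order q = 2^m, i.e. the fixed points of x |-> x^q.\<close>

definition subfield_Fq :: "nat \<Rightarrow> 'a::field set" where
  "subfield_Fq m = {x. x ^ (2 ^ m) = x}"

definition Tr :: "nat \<Rightarrow> 'a::field \<Rightarrow> 'a" where
  "Tr m z = (\<Sum>j<m. z ^ (2 ^ j))"

end

theory Submission
  imports Defs
begin

lemma char2_of_card:
  assumes "card (UNIV :: 'a::{field,finite} set) = ((2::nat) ^ m) ^ 2"
  shows "(2::'a) = 0"
proof -
  have "(\<Sum>y\<in>(UNIV::'a set). y + 1) = (\<Sum>y\<in>UNIV. y)"
    by (rule sum.reindex_bij_witness[of _ "\<lambda>y. y - 1" "\<lambda>y. y + 1"]) auto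
  hence "of_nat (card (UNIV::'a set)) = (0::'a)"
    by (simp add: sum.distrib)
  hence "(2::'a) ^ (2 * m) = 0"
    using assms by (simp add: power_mult[symmetric] mult.commute)
  thus ?thesis by simp
qed

lemma frob:
  assumes "(2::'a::field) = 0"
  shows "((x::'a) + y) ^ (2 ^ j) = x ^ (2 ^ j) + y ^ (2 ^ j)"
proof (induction j)
  case 0 then show ?case by simp
next
  case (Suc j)
  have "(x + y) ^ (2 ^ Suc j) = ((x + y) ^ (2 ^ j)) ^ 2"
    by (simp add: power_mult[symmetric] mult.commute)
  also have "\<dots> = (x ^ (2 ^ j) + y ^ (2 ^ j)) ^ 2" using Suc by simp
  also have "\<dots> = (x ^ (2 ^ j)) ^ 2 + (y ^ (2 ^ j)) ^ 2 + 2 * (x ^ (2 ^ j) * y ^ (2 ^ j))"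
    by (simp add: power2_eq_square algebra_simps)
  also have "\<dots> = x ^ (2 ^ Suc j) + y ^ (2 ^ Suc j)"
    using assms by (simp add: power_mult[symmetric] mult.commute)
  finally show ?case .
qed

theorem proposition5:
  fixes m :: nat and k i A B C D :: "'a::{field,finite}"
  defines "q \<equiv> (2::nat) ^ m"
  defines "\<alpha> \<equiv> A + i * B"
  defines "\<beta> \<equiv> C + i * D"
  assumes card: "card (UNIV :: 'a set) = q ^ 2"
    and k: "k \<in> subfield_Fq m" and trk: "Tr m k = 1"
    and i: "i \<notin> subfield_Fq m" and i2: "i ^ 2 = i + k"
    and ABCD: "A \<in> subfield_Fq m" "B \<in> subfield_Fq m" "C \<in> subfield_Fq m" "D \<in> subfield_Fq m"
    and nz: "\<alpha> * \<beta> \<noteq> 0"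
  shows "(D \<noteq> 0 \<and> A = (B * C + B * D + B) / D \<and> B * D * (B + D) \<noteq> 0
           \<and> k * D ^ 2 + C ^ 2 + C * D + 1 = 0 \<and> Tr m (1 + D / B ^ 2) = 0)
     \<longleftrightarrow> (\<beta> = \<alpha> ^ (q - 1) \<and> \<beta> \<notin> subfield_Fq m
           \<and> Tr m (1 + 1 / \<alpha> ^ (q + 1)) = 0 \<and> \<alpha> + \<alpha> ^ q \<noteq> \<beta> + \<beta> ^ q)"
proof -
  have two: "(2::'a) = 0" using char2_of_card card unfolding q_def by blast
  have neg: "\<And>x::'a. x + x = 0"
  proof -
    fix x :: 'a have "x + x = 2 * x" by (rule mult_2[symmetric])
    thus "x + x = 0" using two by simp
  qed
  have mneg: "\<And>x::'a. - x = x" by (rule minus_unique[OF neg])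
  have eqiff: "\<And>x y::'a. x = y \<longleftrightarrow> x + y = 0"
  proof -
    fix x y :: 'a
    have "x + y = 0 \<longleftrightarrow> x = - y" by (rule eq_neg_iff_add_eq_0[symmetric])
    thus "x = y \<longleftrightarrow> x + y = 0" by (simp only: mneg)
  qed
  have fq: "\<And>x. x \<in> subfield_Fq m \<longleftrightarrow> x ^ q = x" by (simp add: subfield_Fq_def q_def)
  have fr: "\<And>x y::'a. (x + y) ^ q = x ^ q + y ^ q" unfolding q_def using frob[OF two] by blast
  have q1: "q \<ge> 1" by (simp add: q_def)
  have Aq: "A ^ q = A" and Bq: "B ^ q = B" and Cq: "C ^ q = C" and Dq: "D ^ q = D" and kq: "k ^ q = k"
    using ABCD k fq by auto
  have iqn: "i ^ q \<noteq> i" using i fq by auto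
  have "(i ^ q) ^ 2 = (i ^ 2) ^ q" by (simp add: power_mult[symmetric] mult.commute)
  also have "\<dots> = i ^ q + k" using i2 fr kq by simp
  finally have y2: "(i ^ q) ^ 2 = i ^ q + k" .
  have "\<And>y. y ^ 2 = y + k \<Longrightarrow> (y + i) * (y + i + 1) = 2 * (y * i + y + i + k)"
    using i2 by algebra
  hence "(i ^ q + i) * (i ^ q + i + 1) = 2 * (i ^ q * i + i ^ q + i + k)" using y2 by blast
  hence "(i ^ q + i) * (i ^ q + i + 1) = 0" using two by simp
  moreover have "i ^ q + i \<noteq> 0" using iqn eqiff by blast
  ultimately have "i ^ q + i + 1 = 0" by simp
  hence "i ^ q + (i + 1) = 0" by (simp add: add.assoc)
  hence iq: "i ^ q = i + 1" using eqiff by blast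
  have mf: "\<And>x y::'a. (x * y) ^ q = x ^ q * y ^ q" by (simp add: power_mult_distrib)
  have \<alpha>q: "\<alpha> ^ q = \<alpha> + B"
    unfolding \<alpha>_def by (simp add: fr mf Aq Bq iq algebra_simps)
  have \<beta>q: "\<beta> ^ q = \<beta> + D"
    unfolding \<beta>_def by (simp add: fr mf Cq Dq iq algebra_simps)
  have \<alpha>nz: "\<alpha> \<noteq> 0" using nz by auto
  have qs: "q = Suc (q - 1)" using q1 by simp
  have pw: "\<alpha> ^ q = \<alpha> ^ (q - 1) * \<alpha>" by (subst qs) (simp add: power_Suc2)
  have \<beta>iff: "\<beta> = \<alpha> ^ (q - 1) \<longleftrightarrow> \<beta> * \<alpha> = \<alpha> ^ q"
    using pw \<alpha>nz by auto
  define X1 where "X1 = C * A + k * D * B + A + B"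
  define X2 where "X2 = C * B + D * A + D * B + B"
  have Xid: "\<beta> * \<alpha> + \<alpha> ^ q = X1 + i * X2"
  proof -
    have "\<And>ii. ii ^ 2 = ii + k \<Longrightarrow> (C + ii * D) * (A + ii * B) + ((A + ii * B) + B) = X1 + ii * X2"
      unfolding X1_def X2_def by algebra
    hence "\<beta> * \<alpha> + (\<alpha> + B) = X1 + i * X2" using i2 unfolding \<alpha>_def \<beta>_def by blast
    thus ?thesis using \<alpha>q by simp
  qed
  have indep: "\<And>x y. x ^ q = x \<Longrightarrow> y ^ q = y \<Longrightarrow> x + i * y = 0 \<Longrightarrow> x = 0 \<and> y = 0"
  proof -
    fix x y assume xq: "x ^ q = x" and yq: "y ^ q = y" and e: "x + i * y = (0::'a)"
    have "(x + i * y) ^ q = 0" using e q1 by simp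
    hence "x + (i + 1) * y = 0" by (simp add: fr mf xq yq iq)
    hence "y + (x + i * y) = 0" by (simp add: algebra_simps)
    hence "y = 0" using e by simp
    thus "x = 0 \<and> y = 0" using e by simp
  qed
  have X1q: "X1 ^ q = X1" unfolding X1_def by (simp add: fr mf Aq Bq Cq Dq kq)
  have X2q: "X2 ^ q = X2" unfolding X2_def by (simp add: fr mf Aq Bq Cq Dq kq)
  have Xiff: "\<beta> * \<alpha> = \<alpha> ^ q \<longleftrightarrow> X1 = 0 \<and> X2 = 0"
  proof -
    have "\<beta> * \<alpha> = \<alpha> ^ q \<longleftrightarrow> X1 + i * X2 = 0" using Xid eqiff by metis
    also have "\<dots> \<longleftrightarrow> X1 = 0 \<and> X2 = 0" using indep[OF X1q X2q] by auto
    finally show ?thesis .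
  qed
  have \<beta>F: "\<beta> \<in> subfield_Fq m \<longleftrightarrow> D = 0" unfolding fq \<beta>q by simp
  have s\<alpha>: "\<alpha> + \<alpha> ^ q = B" unfolding \<alpha>q by (simp add: add.assoc[symmetric] neg)
  have s\<beta>: "\<beta> + \<beta> ^ q = D" unfolding \<beta>q by (simp add: add.assoc[symmetric] neg)
  define N where "N = A ^ 2 + A * B + k * B ^ 2"
  have norm: "\<alpha> ^ (q + 1) = N"
  proof -
    have "\<And>ii. ii ^ 2 = ii + k \<Longrightarrow> ((A + ii * B) + B) * (A + ii * B) = N + 2 * (ii * A * B + ii * B ^ 2)"
      unfolding N_def by algebra
    hence "(\<alpha> + B) * \<alpha> = N + 2 * (i * A * B + i * B ^ 2)" using i2 unfolding \<alpha>_def by blast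
    thus ?thesis using two \<alpha>q by (simp add: mult.commute)
  qed
  define E where "E = k * D ^ 2 + C ^ 2 + C * D + 1"
  have X2iff: "X2 = 0 \<longleftrightarrow> A * D = B * C + B * D + B"
  proof -
    have "X2 = A * D + (B * C + B * D + B)" unfolding X2_def by (simp add: algebra_simps)
    thus ?thesis using eqiff by simp
  qed
  have E1: "A * D = B * C + B * D + B \<Longrightarrow> D * X1 = B * E + 2 * (B * C + B * D)"
    unfolding X1_def E_def by algebra
  have E2: "A * D = B * C + B * D + B \<Longrightarrow> D ^ 2 * N = B ^ 2 * E + B ^ 2 * D + 2 * (B ^ 2 * (D ^ 2 + C * D + C + D))"
    unfolding N_def E_def by algebra
  have Ndiv: "A * D = B * C + B * D + B \<Longrightarrow> E = 0 \<Longrightarrow> D \<noteq> 0 \<Longrightarrow> 1 / N = D / B ^ 2"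
  proof -
    assume h: "A * D = B * C + B * D + B" "E = 0" "D \<noteq> 0"
    have "D ^ 2 * N = B ^ 2 * D" using E2[OF h(1)] h(2) two by simp
    hence "D * N = B ^ 2" using h(3) by (simp add: power2_eq_square)
    hence "D / B ^ 2 = D / (D * N)" by simp
    also have "\<dots> = 1 / N" using h(3) by simp
    finally show ?thesis by simp
  qed
  have Adiv: "D \<noteq> 0 \<Longrightarrow> A = (B * C + B * D + B) / D \<longleftrightarrow> A * D = B * C + B * D + B"
    by (auto simp: field_simps)
  have BD: "B + D \<noteq> 0 \<longleftrightarrow> B \<noteq> D" using eqiff by blast
  show ?thesis
  proof
    assume h: "D \<noteq> 0 \<and> A = (B * C + B * D + B) / D \<and> B * D * (B + D) \<noteq> 0
           \<and> k * D ^ 2 + C ^ 2 + C * D + 1 = 0 \<and> Tr m (1 + D / B ^ 2) = 0"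
    hence D0: "D \<noteq> 0" and AD: "A * D = B * C + B * D + B" and B0: "B \<noteq> 0" and BnD: "B \<noteq> D"
      and E0: "E = 0" and tr: "Tr m (1 + D / B ^ 2) = 0"
      using Adiv BD unfolding E_def by auto
    have "X2 = 0" using X2iff AD by simp
    moreover have "X1 = 0" using E1[OF AD] E0 two D0 by simp
    ultimately have "\<beta> = \<alpha> ^ (q - 1)" using \<beta>iff Xiff by simp
    moreover have "1 / \<alpha> ^ (q + 1) = D / B ^ 2" using norm Ndiv[OF AD E0 D0] by simp
    ultimately show "\<beta> = \<alpha> ^ (q - 1) \<and> \<beta> \<notin> subfield_Fq m
           \<and> Tr m (1 + 1 / \<alpha> ^ (q + 1)) = 0 \<and> \<alpha> + \<alpha> ^ q \<noteq> \<beta> + \<beta> ^ q"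
      using tr \<beta>F D0 s\<alpha> s\<beta> BnD by simp
  next
    assume h: "\<beta> = \<alpha> ^ (q - 1) \<and> \<beta> \<notin> subfield_Fq m
           \<and> Tr m (1 + 1 / \<alpha> ^ (q + 1)) = 0 \<and> \<alpha> + \<alpha> ^ q \<noteq> \<beta> + \<beta> ^ q"
    hence X0: "X1 = 0" "X2 = 0" and D0: "D \<noteq> 0" and BnD: "B \<noteq> D"
      and tr: "Tr m (1 + 1 / \<alpha> ^ (q + 1)) = 0"
      using \<beta>iff Xiff \<beta>F s\<alpha> s\<beta> by auto
    have AD: "A * D = B * C + B * D + B" using X2iff X0 by simp
    have B0: "B \<noteq> 0"
    proof
      assume "B = 0"
      hence "A * D = 0" using AD by simp
      hence "A = 0" using D0 by simp
      thus False using \<alpha>nz \<open>B = 0\<close> unfolding \<alpha>_def by simp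
    qed
    have "B * E = 0" using E1[OF AD] X0 two by simp
    hence E0: "E = 0" using B0 by simp
    have "1 / \<alpha> ^ (q + 1) = D / B ^ 2" using norm Ndiv[OF AD E0 D0] by simp
    thus "D \<noteq> 0 \<and> A = (B * C + B * D + B) / D \<and> B * D * (B + D) \<noteq> 0
           \<and> k * D ^ 2 + C ^ 2 + C * D + 1 = 0 \<and> Tr m (1 + D / B ^ 2) = 0"
      using tr D0 AD Adiv B0 BnD BD E0 unfolding E_def by simp
  qed
qed

end
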